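(* For all real $y$, $$\sum_{k=0}^{4}g_{5k}^2(y)=\frac15e^{2y}+\frac25e^{(\sqrt5-1)y/2}+\frac25e^{-(\sqrt5+1)y/2}.$$
   Context: The polar 5-dimensional cosexponential functions are $g_{5k}(y)=\sum_{p=0}^\infty \frac{y^{k+5p}}{(k+5p)!}$ for $k=0,\dots,4$ and real $y$. *)

theory Defs
  imports "HOL-Analysis.Analysis"
begin

definition g5 :: "nat \<Rightarrow> real \<Rightarrow> real" where
  "g5 k y = (\<Sum>p. y ^ (k + 5 * p) / fact (k + 5 * p))"

end

theory Submission
  imports Defs
begin

definition w5 :: complex where "w5 = cis (2 * pi / 5)"

lemma w5_pow5: "w5 ^ 5 = 1"
  unfolding w5_def Complex.DeMoivre by simp

lemma w5_pow_mod: "w5 ^ m = w5 ^ (m mod 5)"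
proof -
  have "w5 ^ m = w5 ^ (5 * (m div 5) + m mod 5)" by simp
  also have "\<dots> = w5 ^ (m mod 5)"
    by (simp only: power_add power_mult w5_pow5) simp
  finally show ?thesis .
qed

lemma w5_ne1: "w5 \<noteq> 1"
proof
  assume "w5 = 1"
  hence "Im w5 = 0" by simp
  moreover have "sin (2 * pi / 5) > 0" by (rule sin_gt_zero) auto
  ultimately show False unfolding w5_def by simp
qed

lemma w5_pow_eq1: "w5 ^ m = 1 \<longleftrightarrow> 5 dvd m"
proof
  assume h: "w5 ^ m = 1"
  define r where "r = m mod 5"
  have r: "w5 ^ r = 1" "r < 5" using h w5_pow_mod[of m] by (auto simp: r_def)
  have "r = 0"
  proof (rule ccontr)
    assume "r \<noteq> 0"
    then obtain k where k: "(r * k) mod 5 = 1"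
    proof -
      assume a: "\<And>k. r * k mod 5 = 1 \<Longrightarrow> thesis"
      have "r = 1 \<or> r = 2 \<or> r = 3 \<or> r = 4" using \<open>r < 5\<close> \<open>r \<noteq> 0\<close> by auto
      thus thesis using a[of 1] a[of 3] a[of 2] a[of 4] by auto
    qed
    have "w5 = w5 ^ ((r * k) mod 5)" using k by simp
    also have "\<dots> = (w5 ^ r) ^ k" by (simp only: w5_pow_mod[of "r*k", symmetric] power_mult)
    finally show False using r w5_ne1 by simp
  qed
  thus "5 dvd m" by (simp add: r_def dvd_eq_mod_eq_0)
next
  assume "5 dvd m" then obtain q where "m = 5 * q" by auto
  thus "w5 ^ m = 1" by (simp add: power_mult w5_pow5)
qed

lemma w5_sum: "(\<Sum>j<5. w5 ^ (j * m)) = (if 5 dvd m then 5 else 0)"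
proof (cases "5 dvd m")
  case True
  then have "w5 ^ m = 1" using w5_pow_eq1 by simp
  then show ?thesis using True by (simp add: mult.commute[of _ m] power_mult)
next
  case False
  define z where "z = w5 ^ m"
  have "z ^ 5 - 1 = (z - 1) * (\<Sum>j<5. z ^ j)" by (rule power_diff_1_eq)
  moreover have "z ^ 5 = 1" unfolding z_def by (simp add: power_mult[symmetric] w5_pow_eq1)
  moreover have "z \<noteq> 1" using False w5_pow_eq1 z_def by simp
  ultimately have "(\<Sum>j<5. z ^ j) = 0" by simp
  then show ?thesis using False by (simp add: z_def mult.commute[of _ m] power_mult)
qed

lemma g5_eq:
  assumes k: "k < 5"
  shows "complex_of_real (g5 k y) = (\<Sum>j<5. w5^(4*j*k) * exp (w5^j * of_real y)) / 5"
proof -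
  define S where "S = (\<Sum>j<5. w5^(4*j*k) * exp (w5^j * of_real y))"
  have "(\<lambda>n. \<Sum>j<5. w5^(4*j*k) * ((w5^j * of_real y)^n /\<^sub>R fact n)) sums S"
    unfolding S_def by (intro sums_sum sums_mult exp_converges)
  moreover have "(\<Sum>j<5. w5^(4*j*k) * ((w5^j * of_real y)^n /\<^sub>R fact n))
     = (\<Sum>j<5. w5^(j*(n+4*k))) * of_real (y^n / fact n)" for n
    unfolding sum_distrib_right
    by (intro sum.cong refl) (simp add: power_mult_distrib scaleR_conv_of_real field_simps
         power_add power_mult[symmetric])
  ultimately have "(\<lambda>n. (if 5 dvd (n+4*k) then 5 else 0) * complex_of_real (y^n / fact n)) sums S"
    by (simp add: w5_sum)
  hence "(\<lambda>n. (if 5 dvd (n+4*k) then 5 else 0) * complex_of_real (y^n / fact n) / 5) sums (S / 5)"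
    by (rule sums_divide)
  hence "(\<lambda>n. complex_of_real (if 5 dvd (n+4*k) then y^n / fact n else 0)) sums (S / 5)"
  proof -
    assume h: "(\<lambda>n. (if 5 dvd (n+4*k) then 5 else 0) * complex_of_real (y^n / fact n) / 5) sums (S / 5)"
    have eq: "(\<lambda>n. (if 5 dvd (n+4*k) then 5 else 0) * complex_of_real (y^n / fact n) / 5)
       = (\<lambda>n. complex_of_real (if 5 dvd (n+4*k) then y^n / fact n else 0))"
      by (rule ext) (simp split: if_split)
    from h show ?thesis unfolding eq .
  qed
  hence "(\<lambda>p. complex_of_real (if 5 dvd ((k+5*p)+4*k) then y^(k+5*p) / fact (k+5*p) else 0)) sums (S / 5)"
  proof (subst sums_mono_reindex[where g = "\<lambda>p. k + 5*p"])
    show "strict_mono (\<lambda>p. k + 5*p)" by (auto simp: strict_mono_def)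
  next
    fix n assume "n \<notin> range (\<lambda>p. k + 5*p)"
    moreover have "5 dvd (n+4*k) \<Longrightarrow> n \<in> range (\<lambda>p. k + 5*p)"
    proof -
      assume "5 dvd (n+4*k)"
      then obtain q where q: "n + 4*k = 5*q" by (auto simp: dvd_def)
      have "k \<le> q" using q k by linarith
      hence "n = k + 5 * (q - k)" using q by (simp add: algebra_simps)
      thus ?thesis by (metis rangeI)
    qed
    ultimately show "complex_of_real (if 5 dvd (n+4*k) then y^n / fact n else 0) = 0" by auto
  qed
  moreover have "5 dvd ((k+5*p)+4*k)" for p by presburger
  ultimately have *: "(\<lambda>p. complex_of_real (y^(k+5*p) / fact (k+5*p))) sums (S / 5)" by simp
  hence "(\<lambda>p. Im (complex_of_real (y^(k+5*p) / fact (k+5*p)))) sums Im (S / 5)"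
    by (rule sums_complex_iff[THEN iffD1, THEN conjunct2])
  hence "(\<lambda>p. 0::real) sums Im (S / 5)" by (simp only: Im_complex_of_real)
  hence im: "Im (S/5) = 0" using sums_zero sums_unique2 by blast
  from * have "(\<lambda>p. Re (complex_of_real (y^(k+5*p) / fact (k+5*p)))) sums Re (S / 5)"
    by (rule sums_complex_iff[THEN iffD1, THEN conjunct1])
  hence "(\<lambda>p. y^(k+5*p) / fact (k+5*p)) sums Re (S / 5)" by (simp only: Re_complex_of_real)
  hence "g5 k y = Re (S/5)" unfolding g5_def by (rule sums_unique[symmetric])
  thus ?thesis using im unfolding S_def[symmetric] by (simp add: complex_eq_iff del: Re_divide_numeral Im_divide_numeral)
qed

lemma sum5: "(\<Sum>i<5::nat. f i) = f 0 + f 1 + f 2 + f 3 + f 4"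
proof -
  have "{..<5::nat} = {0,1,2,3,4}" by auto
  thus ?thesis by (simp add: algebra_simps)
qed

lemma key:
  fixes E :: "nat \<Rightarrow> complex"
  shows "(\<Sum>k<5. (\<Sum>j<5. w5^(4*j*k) * E j)^2)
     = 5 * (E 0 * E 0 + 2 * (E 1 * E 4) + 2 * (E 2 * E 3))"
proof -
  have "(\<Sum>k<5. (\<Sum>j<5. w5^(4*j*k) * E j)^2)
      = (\<Sum>k<5. \<Sum>j<5. \<Sum>l<5. w5^(k*(4*j+4*l)) * (E j * E l))"
    unfolding power2_eq_square sum_product
    by (intro sum.cong refl) (simp add: power_add power_mult[symmetric] algebra_simps)
  also have "\<dots> = (\<Sum>j<5. \<Sum>l<5. \<Sum>k<5. w5^(k*(4*j+4*l)) * (E j * E l))"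
    by (rule trans[OF sum.swap]) (rule sum.cong[OF refl], rule sum.swap)
  also have "\<dots> = (\<Sum>j<5. \<Sum>l<5. (if 5 dvd (4*j+4*l) then 5 else 0) * (E j * E l))"
    by (simp add: sum_distrib_right[symmetric] w5_sum)
  also have "\<dots> = 5 * (E 0 * E 0 + 2 * (E 1 * E 4) + 2 * (E 2 * E 3))"
    unfolding sum5 by (simp add: algebra_simps)
  finally show ?thesis .
qed

lemma consts5:
  "w5 + w5^4 = complex_of_real ((sqrt 5 - 1)/2)"
  "w5^2 + w5^3 = complex_of_real (-((sqrt 5 + 1)/2))"
proof -
  define t where "t = 2 * pi / 5"
  have w: "w5 = cis t" by (simp add: w5_def t_def)
  have "w5 * w5^4 = 1" using w5_pow5 by (simp add: power_Suc[symmetric] del: power_Suc)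
  moreover have "w5 \<noteq> 0" by (simp add: w)
  ultimately have "w5^4 = inverse w5" by (simp add: field_simps)
  hence a: "w5 + w5^4 = complex_of_real (2 * cos t)" by (simp add: w complex_eq_iff)
  have "w5^2 * w5^3 = 1" using w5_pow5 by (simp add: power_add[symmetric] del: power_Suc)
  moreover have "w5 \<noteq> 0" by (simp add: w)
  ultimately have "w5^3 = inverse (w5^2)" by (simp add: field_simps)
  moreover have "w5^2 = cis (2*t)" by (simp add: w Complex.DeMoivre)
  ultimately have b: "w5^2 + w5^3 = complex_of_real (2 * cos (2*t))" by (simp add: complex_eq_iff)
  have "(\<Sum>j<5. w5 ^ (j * 1)) = 0" using w5_sum[of 1] by simp
  hence "1 + (w5 + w5^4) + (w5^2 + w5^3) = 0" unfolding sum5 by (simp add: algebra_simps power2_eq_square)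
  hence "1 + 2 * cos t + 2 * cos (2*t) = 0" unfolding a b
    by (metis of_real_1 of_real_add of_real_eq_0_iff)
  hence q: "(2 * cos t)^2 + 2 * cos t - 1 = 0" unfolding cos_double_cos by (simp add: power2_eq_square algebra_simps)
  have pos: "cos t > 0" unfolding t_def by (rule cos_gt_zero) auto
  have "(2 * (2 * cos t) + 1)^2 = 5" using q by (simp add: power2_eq_square algebra_simps)
  hence "sqrt 5 = 2 * (2 * cos t) + 1" using pos by (metis real_sqrt_abs abs_of_pos add_pos_pos mult_pos_pos zero_less_numeral zero_less_one)
  hence ca: "2 * cos t = (sqrt 5 - 1)/2" by simp
  have cb: "2 * cos (2*t) = -((sqrt 5 + 1)/2)"
    using \<open>1 + 2 * cos t + 2 * cos (2*t) = 0\<close> ca by (simp add: field_simps)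
  show "w5 + w5^4 = complex_of_real ((sqrt 5 - 1)/2)" using a ca by simp
  show "w5^2 + w5^3 = complex_of_real (-((sqrt 5 + 1)/2))" using b cb by simp
qed

theorem mainTheorem4:
  fixes y :: real
  shows "(\<Sum>k\<le>4. (g5 k y)\<^sup>2) =
    exp (2 * y) / 5 + 2 / 5 * exp ((sqrt 5 - 1) * y / 2)
      + 2 / 5 * exp (- ((sqrt 5 + 1) * y / 2))"
proof -
  define E where "E j = exp (w5^j * complex_of_real y)" for j :: nat
  have "complex_of_real (\<Sum>k\<le>4. (g5 k y)\<^sup>2) = (\<Sum>k<5. (complex_of_real (g5 k y))\<^sup>2)"
    by (simp add: lessThan_Suc_atMost[symmetric])
  also have "\<dots> = (\<Sum>k<5. ((\<Sum>j<5. w5^(4*j*k) * E j) / 5)\<^sup>2)"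
    by (intro sum.cong refl) (simp add: g5_eq E_def)
  also have "\<dots> = (\<Sum>k<5. (\<Sum>j<5. w5^(4*j*k) * E j)\<^sup>2) / 25"
    unfolding power_divide sum_divide_distrib[symmetric] by simp
  also have "\<dots> = (E 0 * E 0 + 2 * (E 1 * E 4) + 2 * (E 2 * E 3)) / 5"
    by (simp add: key)
  also have "E 0 * E 0 = complex_of_real (exp (2 * y))"
    by (simp add: E_def exp_add[symmetric] exp_of_real[symmetric])
  also have "E 1 * E 4 = exp ((w5 + w5^4) * complex_of_real y)"
    by (simp add: E_def exp_add[symmetric] algebra_simps)
  also have "\<dots> = complex_of_real (exp ((sqrt 5 - 1) * y / 2))"
    by (simp add: consts5 exp_of_real[symmetric])
  also have "E 2 * E 3 = exp ((w5^2 + w5^3) * complex_of_real y)"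
    by (simp add: E_def exp_add[symmetric] algebra_simps)
  also have "\<dots> = complex_of_real (exp (- ((sqrt 5 + 1) * y / 2)))"
    by (simp add: consts5 exp_of_real[symmetric])
  finally have "complex_of_real (\<Sum>k\<le>4. (g5 k y)\<^sup>2) = complex_of_real (exp (2 * y) / 5 + 2 / 5 * exp ((sqrt 5 - 1) * y / 2)
      + 2 / 5 * exp (- ((sqrt 5 + 1) * y / 2)))"
    by (simp add: field_simps)
  thus ?thesis using of_real_eq_iff by blast
qed

end
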